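(* Let $(M,g_M)$ be a connected Riemannian manifold and let $f:(M,g_M)\to\mathbb{R}$ be a smooth function, where $\mathbb{R}$ carries its standard flat metric. Then $f$ is a conformal Riemannian morphism if and only if $f$ is constant or $\mathrm{grad}(f)(x)\neq 0$ for every $x\in M$.
   Context: Let $V,W$ be real inner-product spaces and $T:V\to W$ linear with kernel $K$ and range $R(T)$. $T$ is called a geometric function if there exist a subspace $C\subset V$ with $V=K\oplus C$ and a number $r>0$ such that $\langle T(u),T(v)\rangle=r\langle u,v\rangle$ for all $u,v\in C$; $C$ is called a Conf subspace of $T$ (denoted $\mathrm{Conf}(T)$) and $r$ a conformality factor of $T$. A smooth map $f:(M,g_M)\to(N,g_N)$ between Riemannian manifolds is a conformal Riemannian morphism if there is a smooth function $\wedge_f:M\to\mathbb{R}^{+}$ (the Riemannian factor) such that for every $x\in M$, $df_x:T_xM\to T_{f(x)}N$ is a geometric function with conformality factor $\wedge_f(x)$. The gradient is defined by $df_x(X)=g_M(x)(\mathrm{grad}(f)(x),X)$ for all $X\in T_xM$. *)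

theory Defs
  imports "HOL-Analysis.Analysis"
begin

fun iter_deriv :: "'a::real_normed_vector list \<Rightarrow> ('a \<Rightarrow> 'b::real_normed_vector) \<Rightarrow> 'a \<Rightarrow> 'b" where
  "iter_deriv [] f = f"
| "iter_deriv (v # vs) f = (\<lambda>x. frechet_derivative (iter_deriv vs f) (at x) v)"

definition smooth_on :: "'a::euclidean_space set \<Rightarrow> ('a \<Rightarrow> 'b::real_normed_vector) \<Rightarrow> bool" where
  "smooth_on U f \<longleftrightarrow> open U \<and> (\<forall>vs. iter_deriv vs f differentiable_on U)"

text \<open>A chart is a pair (U, phi) with U an open subset of the manifold and
  phi a homeomorphism of U onto an open subset of the model space 'e.\<close>
type_synonym ('m, 'e) chart = "'m set \<times> ('m \<Rightarrow> 'e)"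

definition chart_inv :: "('m, 'e) chart \<Rightarrow> 'e \<Rightarrow> 'm" where
  "chart_inv c = inv_into (fst c) (snd c)"

definition smooth_manifold :: "'m topology \<Rightarrow> ('m, 'e::euclidean_space) chart set \<Rightarrow> bool" where
  "smooth_manifold X A \<longleftrightarrow>
     Hausdorff_space X \<and> second_countable X \<and>
     topspace X = (\<Union>c\<in>A. fst c) \<and>
     (\<forall>c\<in>A. openin X (fst c) \<and> open (snd c ` fst c) \<and>
        homeomorphic_map (subtopology X (fst c)) (top_of_set (snd c ` fst c)) (snd c)) \<and>
     (\<forall>c\<in>A. \<forall>d\<in>A. smooth_on (snd d ` (fst c \<inter> fst d)) (snd c \<circ> chart_inv d))"

definition smooth_fun :: "('m, 'e::euclidean_space) chart set \<Rightarrow> ('m \<Rightarrow> real) \<Rightarrow> bool" where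
  "smooth_fun A f \<longleftrightarrow> (\<forall>c\<in>A. smooth_on (snd c ` fst c) (f \<circ> chart_inv c))"

text \<open>Riemannian metric in local coordinates: for each chart c and each
  point y of its image, g c y is the metric tensor at the corresponding point,
  acting on coordinate tangent vectors.\<close>
definition riemannian_metric ::
  "'m topology \<Rightarrow> ('m, 'e::euclidean_space) chart set \<Rightarrow> (('m, 'e) chart \<Rightarrow> 'e \<Rightarrow> 'e \<Rightarrow> 'e \<Rightarrow> real) \<Rightarrow> bool" where
  "riemannian_metric X A g \<longleftrightarrow>
     (\<forall>c\<in>A. \<forall>y\<in>snd c ` fst c.
        bilinear (g c y) \<and> (\<forall>u v. g c y u v = g c y v u) \<and> (\<forall>u. u \<noteq> 0 \<longrightarrow> g c y u u > 0)) \<and>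
     (\<forall>c\<in>A. \<forall>u v. smooth_on (snd c ` fst c) (\<lambda>y. g c y u v)) \<and>
     (\<forall>c\<in>A. \<forall>d\<in>A. \<forall>p\<in>fst c \<inter> fst d. \<forall>u v.
        g d (snd d p) u v =
        g c (snd c p) (frechet_derivative (snd c \<circ> chart_inv d) (at (snd d p)) u)
                      (frechet_derivative (snd c \<circ> chart_inv d) (at (snd d p)) v))"

definition riemannian_manifold ::
  "'m topology \<Rightarrow> ('m, 'e::euclidean_space) chart set \<Rightarrow> (('m, 'e) chart \<Rightarrow> 'e \<Rightarrow> 'e \<Rightarrow> 'e \<Rightarrow> real) \<Rightarrow> bool" where
  "riemannian_manifold X A g \<longleftrightarrow> smooth_manifold X A \<and> riemannian_metric X A g"

definition conformality_factor ::
  "('v::real_vector \<Rightarrow> 'v \<Rightarrow> real) \<Rightarrow> ('w::real_vector \<Rightarrow> 'w \<Rightarrow> real) \<Rightarrow> ('v \<Rightarrow> 'w) \<Rightarrow> real \<Rightarrow> bool" where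
  "conformality_factor gV gW T r \<longleftrightarrow>
     linear T \<and> r > 0 \<and>
     (\<exists>C. subspace C \<and> C \<inter> {v. T v = 0} = {0} \<and>
          (\<forall>v. \<exists>k c. T k = 0 \<and> c \<in> C \<and> v = k + c) \<and>
          (\<forall>u\<in>C. \<forall>v\<in>C. gW (T u) (T v) = r * gV u v))"

definition geometric_function ::
  "('v::real_vector \<Rightarrow> 'v \<Rightarrow> real) \<Rightarrow> ('w::real_vector \<Rightarrow> 'w \<Rightarrow> real) \<Rightarrow> ('v \<Rightarrow> 'w) \<Rightarrow> bool" where
  "geometric_function gV gW T \<longleftrightarrow> (\<exists>r. conformality_factor gV gW T r)"

definition dfun :: "('m \<Rightarrow> real) \<Rightarrow> ('m, 'e::euclidean_space) chart \<Rightarrow> 'm \<Rightarrow> 'e \<Rightarrow> real" where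
  "dfun f c x = frechet_derivative (f \<circ> chart_inv c) (at (snd c x))"

definition grad ::
  "(('m, 'e::euclidean_space) chart \<Rightarrow> 'e \<Rightarrow> 'e \<Rightarrow> 'e \<Rightarrow> real) \<Rightarrow> ('m \<Rightarrow> real) \<Rightarrow> ('m, 'e) chart \<Rightarrow> 'm \<Rightarrow> 'e" where
  "grad g f c x = (THE w. \<forall>v. g c (snd c x) w v = dfun f c x v)"

definition conformal_riemannian_morphism_real ::
  "'m topology \<Rightarrow> ('m, 'e::euclidean_space) chart set \<Rightarrow> (('m, 'e) chart \<Rightarrow> 'e \<Rightarrow> 'e \<Rightarrow> 'e \<Rightarrow> real)
   \<Rightarrow> ('m \<Rightarrow> real) \<Rightarrow> bool" where
  "conformal_riemannian_morphism_real X A g f \<longleftrightarrow>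
     smooth_fun A f \<and>
     (\<exists>\<Lambda>. smooth_fun A \<Lambda> \<and> (\<forall>x\<in>topspace X. \<Lambda> x > 0) \<and>
        (\<forall>x\<in>topspace X. \<forall>c\<in>A. x \<in> fst c \<longrightarrow>
           conformality_factor (g c (snd c x)) (\<lambda>a b. a * b) (dfun f c x) (\<Lambda> x)))"

end

theory Submission
  imports Defs "Jordan_Normal_Form.Determinant"
begin


lemma iter_deriv_append: "iter_deriv vs (iter_deriv [v] h) = iter_deriv (vs @ [v]) h"
  by (induction vs) auto

lemma fd_cong_open:
  assumes "open U" "x \<in> U" "\<And>y. y \<in> U \<Longrightarrow> f y = g y"
  shows "frechet_derivative f (at x) = frechet_derivative g (at x)"
proof -
  have "(f has_derivative D) (at x) \<longleftrightarrow> (g has_derivative D) (at x)" for D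
  proof
    assume "(f has_derivative D) (at x)"
    from has_derivative_transform_within_open[OF this assms(1,2)] assms(3)
    show "(g has_derivative D) (at x)" by simp
  next
    assume "(g has_derivative D) (at x)"
    from has_derivative_transform_within_open[OF this assms(1,2)] assms(3)
    show "(f has_derivative D) (at x)" by simp
  qed
  then show ?thesis unfolding frechet_derivative_def by simp
qed

lemma differentiable_on_cong_open:
  assumes U: "open U" and eq: "\<And>y. y \<in> U \<Longrightarrow> f y = g y" and fd: "f differentiable_on U"
  shows "g differentiable_on U"
  unfolding differentiable_on_eq_differentiable_at[OF U]
proof
  fix x assume x: "x \<in> U"
  then have "f differentiable at x" using fd differentiable_on_eq_differentiable_at[OF U] by blast
  then obtain D where "(f has_derivative D) (at x)" unfolding differentiable_def by blast
  from has_derivative_transform_within_open[OF this U x] eq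
  have "(g has_derivative D) (at x)" by simp
  then show "g differentiable at x" unfolding differentiable_def by blast
qed

lemma iter_deriv_cong_open:
  assumes "open U" "\<And>y. y \<in> U \<Longrightarrow> f y = g y"
  shows "y \<in> U \<Longrightarrow> iter_deriv vs f y = iter_deriv vs g y"
proof (induction vs arbitrary: y)
  case Nil then show ?case using assms by simp
next
  case (Cons v vs)
  then show ?case using fd_cong_open[OF assms(1) Cons.prems, of "iter_deriv vs f" "iter_deriv vs g"]
    by simp
qed

lemma smooth_on_cong:
  assumes U: "open U" and eq: "\<And>y. y \<in> U \<Longrightarrow> f y = g y" and sm: "smooth_on U f"
  shows "smooth_on U g"
  unfolding smooth_on_def
proof (intro conjI allI U)
  fix vs
  have fd: "iter_deriv vs f differentiable_on U" using sm unfolding smooth_on_def by blast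
  have eqv: "iter_deriv vs f y = iter_deriv vs g y" if "y \<in> U" for y
      using iter_deriv_cong_open[of U f g y vs] U eq that by blast
  show "iter_deriv vs g differentiable_on U" by (rule differentiable_on_cong_open[OF U eqv fd])
qed

lemma smooth_coind:
  assumes U: "open U" and h: "h \<in> S"
    and d: "\<And>k. k \<in> S \<Longrightarrow> k differentiable_on U"
    and s: "\<And>k v. k \<in> S \<Longrightarrow> \<exists>k'\<in>S. \<forall>x\<in>U. frechet_derivative k (at x) v = k' x"
  shows "smooth_on U h"
proof -
  have *: "\<forall>k\<in>S. \<exists>k'\<in>S. \<forall>x\<in>U. iter_deriv vs k x = k' x" for vs
  proof (induction vs)
    case Nil then show ?case by auto
  next
    case (Cons v vs)
    show ?case
    proof
      fix k assume "k \<in> S"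
      then obtain k' where k': "k' \<in> S" "\<forall>x\<in>U. iter_deriv vs k x = k' x" using Cons by blast
      obtain k'' where k'': "k'' \<in> S" "\<forall>x\<in>U. frechet_derivative k' (at x) v = k'' x"
        using s[OF k'(1)] by blast
      have "\<forall>x\<in>U. iter_deriv (v # vs) k x = k'' x"
        using fd_cong_open[OF U, of _ "iter_deriv vs k" k'] k' k'' by simp
      then show "\<exists>k'\<in>S. \<forall>x\<in>U. iter_deriv (v # vs) k x = k' x" using k'' by blast
    qed
  qed
  show ?thesis unfolding smooth_on_def
  proof (intro conjI allI U)
    fix vs
    obtain k' where "k' \<in> S" "\<forall>x\<in>U. iter_deriv vs h x = k' x" using * h by blast
    then show "iter_deriv vs h differentiable_on U"
      using differentiable_on_cong_open[OF U, of k' "iter_deriv vs h"] d by simp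
  qed
qed

lemma smooth_on_open: "smooth_on U f \<Longrightarrow> open U"
  unfolding smooth_on_def by simp

lemma smooth_on_differentiable: assumes "smooth_on U f" shows "f differentiable_on U"
proof -
  have "iter_deriv [] f differentiable_on U" using assms unfolding smooth_on_def by blast
  then show ?thesis by simp
qed

lemma smooth_on_differentiable_at: "smooth_on U f \<Longrightarrow> x \<in> U \<Longrightarrow> f differentiable at x"
  using smooth_on_differentiable differentiable_on_eq_differentiable_at smooth_on_open by blast

lemma smooth_on_continuous: "smooth_on U f \<Longrightarrow> continuous_on U f"
  using smooth_on_differentiable differentiable_imp_continuous_on by blast

lemma smooth_on_deriv:
  assumes "smooth_on U f" shows "smooth_on U (\<lambda>x. frechet_derivative f (at x) v)"
proof -
  have "(\<lambda>x. frechet_derivative f (at x) v) = iter_deriv [v] f" by simp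
  moreover have "iter_deriv vs (iter_deriv [v] f) differentiable_on U" for vs
    using assms unfolding smooth_on_def iter_deriv_append by blast
  ultimately show ?thesis using assms unfolding smooth_on_def by simp
qed

lemma iter_deriv_const: "\<exists>c. iter_deriv vs (\<lambda>_. k) = (\<lambda>_. c)"
proof (induction vs)
  case Nil then show ?case by auto
next
  case (Cons v vs)
  then obtain c where "iter_deriv vs (\<lambda>_. k) = (\<lambda>_. c)" by blast
  moreover have "frechet_derivative (\<lambda>_. c) (at x) = (\<lambda>_. 0)" for x :: 'a
    by (rule frechet_derivative_at[OF has_derivative_const, symmetric])
  ultimately show ?case by auto
qed

lemma smooth_const: "open U \<Longrightarrow> smooth_on U (\<lambda>_. k)"
  unfolding smooth_on_def
proof (intro conjI allI)
  fix vs :: "'a list"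
  obtain c where "iter_deriv vs (\<lambda>_. k) = (\<lambda>_. c)" using iter_deriv_const by blast
  then show "iter_deriv vs (\<lambda>_. k) differentiable_on U" by simp
qed

inductive_set salg :: "'a::euclidean_space set \<Rightarrow> ('a \<Rightarrow> real) \<Rightarrow> ('a \<Rightarrow> real) set" for U d where
  base: "smooth_on U a \<Longrightarrow> a \<in> salg U d"
| inv: "(\<lambda>x. inverse (d x)) \<in> salg U d"
| add: "a \<in> salg U d \<Longrightarrow> b \<in> salg U d \<Longrightarrow> (\<lambda>x. a x + b x) \<in> salg U d"
| mult: "a \<in> salg U d \<Longrightarrow> b \<in> salg U d \<Longrightarrow> (\<lambda>x. a x * b x) \<in> salg U d"

lemma salg_closed:
  assumes U: "open U" and d: "smooth_on U d" and nz: "\<And>x. x \<in> U \<Longrightarrow> d x \<noteq> 0"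
  shows "k \<in> salg U d \<Longrightarrow> k differentiable_on U \<and>
           (\<forall>v. \<exists>k'\<in>salg U d. \<forall>x\<in>U. frechet_derivative k (at x) v = k' x)"
proof (induction rule: salg.induct)
  case (base a)
  have "a differentiable_on U" by (rule smooth_on_differentiable[OF base])
  moreover have "\<exists>k'\<in>salg U d. \<forall>x\<in>U. frechet_derivative a (at x) v = k' x" for v
  proof -
    have "(\<lambda>x. frechet_derivative a (at x) v) \<in> salg U d"
      by (rule salg.base[OF smooth_on_deriv[OF base]])
    then show ?thesis by (rule bexI[rotated]) simp
  qed
  ultimately show ?case by blast
next
  case inv
  have hd: "((\<lambda>x. inverse (d x)) has_derivative
      (\<lambda>h. - (inverse (d x) * frechet_derivative d (at x) h * inverse (d x)))) (at x)" if x: "x \<in> U" for x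
  proof -
    have "d differentiable at x" by (rule smooth_on_differentiable_at[OF d x])
    then have "(d has_derivative frechet_derivative d (at x)) (at x)"
      by (simp add: frechet_derivative_works)
    from has_derivative_compose[OF this has_derivative_inverse'[OF nz[OF x]]]
    show ?thesis by (simp add: o_def)
  qed
  have "(\<lambda>x. inverse (d x)) differentiable_on U"
    unfolding differentiable_on_eq_differentiable_at[OF U] differentiable_def
  proof
    fix x assume "x \<in> U"
    show "\<exists>D. ((\<lambda>x. inverse (d x)) has_derivative D) (at x)" using hd[OF \<open>x \<in> U\<close>] by blast
  qed
  moreover have "\<exists>k'\<in>salg U d. \<forall>x\<in>U. frechet_derivative (\<lambda>x. inverse (d x)) (at x) v = k' x" for v
  proof -
    let ?m = "\<lambda>x. (-1) * frechet_derivative d (at x) v"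
    let ?k = "\<lambda>x. inverse (d x) * (?m x * inverse (d x))"
    have m1: "(\<lambda>x. -1) \<in> salg U d" by (rule salg.base[OF smooth_const[OF U]])
    have m2: "(\<lambda>x. frechet_derivative d (at x) v) \<in> salg U d" by (rule salg.base[OF smooth_on_deriv[OF d]])
    have "?m \<in> salg U d" by (rule salg.mult[OF m1 m2])
    then have "(\<lambda>x. ?m x * inverse (d x)) \<in> salg U d" by (rule salg.mult[OF _ salg.inv])
    then have "?k \<in> salg U d" by (rule salg.mult[OF salg.inv])
    moreover have "\<forall>x\<in>U. frechet_derivative (\<lambda>x. inverse (d x)) (at x) v = ?k x"
    proof
      fix x assume "x \<in> U"
      from frechet_derivative_at[OF hd[OF this], symmetric]
      show "frechet_derivative (\<lambda>x. inverse (d x)) (at x) v = ?k x" by simp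
    qed
    ultimately show ?thesis by (intro bexI[where x="?k"]) simp_all
  qed
  ultimately show ?case by blast
next
  case (add a b)
  have da: "a differentiable_on U" and db: "b differentiable_on U" using add.IH by blast+
  have hd: "((\<lambda>x. a x + b x) has_derivative
      (\<lambda>h. frechet_derivative a (at x) h + frechet_derivative b (at x) h)) (at x)" if x: "x \<in> U" for x
  proof -
    have "a differentiable at x" "b differentiable at x"
      using da db x differentiable_on_eq_differentiable_at[OF U] by blast+
    then have "(a has_derivative frechet_derivative a (at x)) (at x)"
         "(b has_derivative frechet_derivative b (at x)) (at x)"
      by (simp_all add: frechet_derivative_works)
    from has_derivative_add[OF this] show ?thesis .
  qed
  have "(\<lambda>x. a x + b x) differentiable_on U"
    unfolding differentiable_on_eq_differentiable_at[OF U] differentiable_def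
  proof
    fix x assume "x \<in> U"
    show "\<exists>D. ((\<lambda>x. a x + b x) has_derivative D) (at x)" using hd[OF \<open>x \<in> U\<close>] by blast
  qed
  moreover have "\<exists>k'\<in>salg U d. \<forall>x\<in>U. frechet_derivative (\<lambda>x. a x + b x) (at x) v = k' x" for v
  proof -
    obtain a' where a': "a' \<in> salg U d" "\<forall>x\<in>U. frechet_derivative a (at x) v = a' x"
      using add.IH(1) by blast
    obtain b' where b': "b' \<in> salg U d" "\<forall>x\<in>U. frechet_derivative b (at x) v = b' x"
      using add.IH(2) by blast
    have "\<forall>x\<in>U. frechet_derivative (\<lambda>x. a x + b x) (at x) v = a' x + b' x"
    proof
      fix x assume x: "x \<in> U"
      from frechet_derivative_at[OF hd[OF x], symmetric]
      show "frechet_derivative (\<lambda>x. a x + b x) (at x) v = a' x + b' x"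
        using a' b' x by simp
    qed
    with salg.add[OF a'(1) b'(1)] show ?thesis by (intro bexI[where x="\<lambda>x. a' x + b' x"]) simp_all
  qed
  ultimately show ?case by blast
next
  case (mult a b)
  have da: "a differentiable_on U" and db: "b differentiable_on U" using mult.IH by blast+
  have hd: "((\<lambda>x. a x * b x) has_derivative
      (\<lambda>h. a x * frechet_derivative b (at x) h + frechet_derivative a (at x) h * b x)) (at x)" if x: "x \<in> U" for x
  proof -
    have "a differentiable at x" "b differentiable at x"
      using da db x differentiable_on_eq_differentiable_at[OF U] by blast+
    then have "(a has_derivative frechet_derivative a (at x)) (at x)"
         "(b has_derivative frechet_derivative b (at x)) (at x)"
      by (simp_all add: frechet_derivative_works)
    from has_derivative_mult[OF this] show ?thesis .
  qed
  have "(\<lambda>x. a x * b x) differentiable_on U"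
    unfolding differentiable_on_eq_differentiable_at[OF U] differentiable_def
  proof
    fix x assume "x \<in> U"
    show "\<exists>D. ((\<lambda>x. a x * b x) has_derivative D) (at x)" using hd[OF \<open>x \<in> U\<close>] by blast
  qed
  moreover have "\<exists>k'\<in>salg U d. \<forall>x\<in>U. frechet_derivative (\<lambda>x. a x * b x) (at x) v = k' x" for v
  proof -
    obtain a' where a': "a' \<in> salg U d" "\<forall>x\<in>U. frechet_derivative a (at x) v = a' x"
      using mult.IH(1) by blast
    obtain b' where b': "b' \<in> salg U d" "\<forall>x\<in>U. frechet_derivative b (at x) v = b' x"
      using mult.IH(2) by blast
    have "\<forall>x\<in>U. frechet_derivative (\<lambda>x. a x * b x) (at x) v = a x * b' x + a' x * b x"
    proof
      fix x assume x: "x \<in> U"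
      from frechet_derivative_at[OF hd[OF x], symmetric]
      show "frechet_derivative (\<lambda>x. a x * b x) (at x) v = a x * b' x + a' x * b x"
        using a' b' x by simp
    qed
    with salg.add[OF salg.mult[OF mult.hyps(1) b'(1)] salg.mult[OF a'(1) mult.hyps(2)]]
    show ?thesis by (intro bexI[where x="\<lambda>x. a x * b' x + a' x * b x"]) simp_all
  qed
  ultimately show ?case by blast
qed

lemma salg_smooth:
  assumes "open U" "smooth_on U d" "\<And>x. x \<in> U \<Longrightarrow> d x \<noteq> 0" "k \<in> salg U d"
  shows "smooth_on U k"
  using smooth_coind[of U k "salg U d"] salg_closed[OF assms(1-3)] assms(1,4) by blast

lemma smooth_add: fixes a b :: "'a::euclidean_space \<Rightarrow> real" assumes "smooth_on U a" "smooth_on U b" shows "smooth_on U (\<lambda>x. a x + b x)"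
proof -
  have U: "open U" using assms smooth_on_open by blast
  have "(\<lambda>x. a x + b x) \<in> salg U (\<lambda>_. 1)" by (intro salg.add salg.base assms)
  then show ?thesis by (rule salg_smooth[OF U smooth_const[OF U], rotated]) simp
qed

lemma smooth_mult: fixes a b :: "'a::euclidean_space \<Rightarrow> real" assumes "smooth_on U a" "smooth_on U b" shows "smooth_on U (\<lambda>x. a x * b x)"
proof -
  have U: "open U" using assms smooth_on_open by blast
  have "(\<lambda>x. a x * b x) \<in> salg U (\<lambda>_. 1)" by (intro salg.mult salg.base assms)
  then show ?thesis by (rule salg_smooth[OF U smooth_const[OF U], rotated]) simp
qed

lemma smooth_inverse: fixes d :: "'a::euclidean_space \<Rightarrow> real" assumes "smooth_on U d" "\<And>x. x \<in> U \<Longrightarrow> d x \<noteq> 0"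
  shows "smooth_on U (\<lambda>x. inverse (d x))"
proof -
  have U: "open U" using assms smooth_on_open by blast
  have "(\<lambda>x. inverse (d x)) \<in> salg U d" by (rule salg.inv)
  from salg_smooth[OF U assms(1) _ this] assms(2) show ?thesis by blast
qed

lemma smooth_divide: fixes a d :: "'a::euclidean_space \<Rightarrow> real"
  assumes "smooth_on U a" "smooth_on U d" "\<And>x. x \<in> U \<Longrightarrow> d x \<noteq> 0"
  shows "smooth_on U (\<lambda>x. a x / d x)"
proof -
  have "smooth_on U (\<lambda>x. a x * inverse (d x))" by (rule smooth_mult[OF assms(1) smooth_inverse[OF assms(2,3)]])
  then show ?thesis by (simp add: divide_inverse)
qed

lemma smooth_sum: fixes a :: "'i \<Rightarrow> 'a::euclidean_space \<Rightarrow> real" shows "open U \<Longrightarrow> (\<And>i. i \<in> I \<Longrightarrow> smooth_on U (a i)) \<Longrightarrow> smooth_on U (\<lambda>x. \<Sum>i\<in>I. a i x)"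
proof (induction I rule: infinite_finite_induct)
  case (infinite A) then show ?case by (simp add: smooth_const)
next
  case empty then show ?case by (simp add: smooth_const)
next
  case (insert i F)
  then have "smooth_on U (\<lambda>x. a i x + (\<Sum>i\<in>F. a i x))" by (intro smooth_add) auto
  then show ?case using insert by simp
qed

lemma smooth_prod: fixes a :: "'i \<Rightarrow> 'a::euclidean_space \<Rightarrow> real" shows "open U \<Longrightarrow> (\<And>i. i \<in> I \<Longrightarrow> smooth_on U (a i)) \<Longrightarrow> smooth_on U (\<lambda>x. \<Prod>i\<in>I. a i x)"
proof (induction I rule: infinite_finite_induct)
  case (infinite A) then show ?case by (simp add: smooth_const)
next
  case empty then show ?case by (simp add: smooth_const)
next
  case (insert i F)
  then have "smooth_on U (\<lambda>x. a i x * (\<Prod>i\<in>F. a i x))" by (intro smooth_mult) auto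
  then show ?case using insert by simp
qed



definition pdform :: "('e::euclidean_space \<Rightarrow> 'e \<Rightarrow> real) \<Rightarrow> bool" where
  "pdform G \<longleftrightarrow> bilinear G \<and> (\<forall>u v. G u v = G v u) \<and> (\<forall>u. u \<noteq> 0 \<longrightarrow> G u u > 0)"

lemma pdform_zero: "pdform G \<Longrightarrow> G u u = 0 \<Longrightarrow> u = 0"
  unfolding pdform_def by force

lemma pdform_nonneg: "pdform G \<Longrightarrow> G u u \<ge> 0"
  unfolding pdform_def by (metis bilinear_lzero order_less_imp_le order_refl)

lemma rep_unique:
  assumes G: "pdform G" and w1: "\<forall>v. G w1 v = D v" and w2: "\<forall>v. G w2 v = D v"
  shows "w1 = w2"
proof -
  have "G (w1 - w2) (w1 - w2) = G w1 (w1 - w2) - G w2 (w1 - w2)"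
    using G unfolding pdform_def by (simp add: bilinear_lsub)
  also have "\<dots> = 0" using w1 w2 by simp
  finally have "w1 - w2 = 0" using pdform_zero[OF G] by blast
  then show ?thesis by simp
qed

lemma rep_zero_iff:
  assumes G: "pdform G" and w: "\<forall>v. G w v = D v"
  shows "(\<forall>v. D v = 0) \<longleftrightarrow> w = 0"
proof
  assume "\<forall>v. D v = 0" then show "w = 0" using w pdform_zero[OF G] by metis
next
  assume "w = 0" then show "\<forall>v. D v = 0" using w G unfolding pdform_def by (metis bilinear_lzero)
qed

lemma rep_val_nonneg:
  assumes G: "pdform G" and w: "\<forall>v. G w v = D v"
  shows "D w \<ge> 0"
  using w pdform_nonneg[OF G] by metis

lemma expand_quad:
  assumes G: "pdform G"
  shows "G (v - s *\<^sub>R w) (v - s *\<^sub>R w) = G v v - 2 * s * G w v + s^2 * G w w"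
proof -
  have b: "bilinear G" and sym: "\<And>u v. G u v = G v u" using G unfolding pdform_def by auto
  have "G (v - s *\<^sub>R w) (v - s *\<^sub>R w) = G v v - s * G v w - s * G w v + s * s * G w w"
    by (simp add: bilinear_lsub[OF b] bilinear_rsub[OF b] bilinear_lmul[OF b] bilinear_rmul[OF b]
        algebra_simps)
  then show ?thesis using sym[of v w] by (simp add: power2_eq_square)
qed

lemma rep_cs:
  assumes G: "pdform G" and w: "\<forall>v. G w v = D v"
  shows "(D v)^2 \<le> D w * G v v"
proof (cases "D w = 0")
  case True
  then have "w = 0" using w pdform_zero[OF G] by metis
  then have "\<forall>v. D v = 0" using rep_zero_iff[OF G w] by simp
  then show ?thesis using True by simp
next
  case False
  then have L: "D w > 0" using rep_val_nonneg[OF G w] by simp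
  define s where "s = D v / D w"
  have "0 \<le> G (v - s *\<^sub>R w) (v - s *\<^sub>R w)" using pdform_nonneg[OF G] .
  also have "\<dots> = G v v - 2 * s * D v + s^2 * D w" using expand_quad[OF G] w by simp
  also have "\<dots> = G v v - (D v)^2 / D w" using L unfolding s_def by (simp add: field_simps power2_eq_square)
  finally show ?thesis using L by (simp add: field_simps)
qed

lemma rep_conformal:
  assumes G: "pdform G" and w: "\<forall>v. G w v = D v" and D: "linear D" and L: "D w > 0"
  shows "conformality_factor G (\<lambda>a b. a * b) D (D w)"
  unfolding conformality_factor_def
proof (intro conjI D L exI[of _ "range (\<lambda>t. t *\<^sub>R w)"])
  show "subspace (range (\<lambda>t. t *\<^sub>R w))"
    unfolding subspace_def
    by (auto simp: scaleR_add_left[symmetric] intro!: image_eqI[of _ _ 0] image_eqI)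
  show "range (\<lambda>t. t *\<^sub>R w) \<inter> {v. D v = 0} = {0}"
    using L by (auto simp: linear_scale[OF D] linear_0[OF D])
  show "\<forall>v. \<exists>k c. D k = 0 \<and> c \<in> range (\<lambda>t. t *\<^sub>R w) \<and> v = k + c"
  proof
    fix v
    show "\<exists>k c. D k = 0 \<and> c \<in> range (\<lambda>t. t *\<^sub>R w) \<and> v = k + c"
      using L by (intro exI[of _ "v - (D v / D w) *\<^sub>R w"] exI[of _ "(D v / D w) *\<^sub>R w"])
        (auto simp: linear_diff[OF D] linear_scale[OF D])
  qed
  show "\<forall>u\<in>range (\<lambda>t. t *\<^sub>R w). \<forall>v\<in>range (\<lambda>t. t *\<^sub>R w). D u * D v = D w * G u v"
  proof (clarify)
    fix s t
    have b: "bilinear G" using G unfolding pdform_def by auto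
    have "G (s *\<^sub>R w) (t *\<^sub>R w) = s * t * D w"
      using w by (simp add: bilinear_lmul[OF b] bilinear_rmul[OF b])
    then show "D (s *\<^sub>R w) * D (t *\<^sub>R w) = D w * G (s *\<^sub>R w) (t *\<^sub>R w)"
      by (simp add: linear_scale[OF D])
  qed
qed

lemma rep_conformal_le:
  assumes G: "pdform G" and w: "\<forall>v. G w v = D v" and D: "linear D"
    and cf: "conformality_factor G (\<lambda>a b. a * b) D r" and v0: "D v0 \<noteq> 0"
  shows "r \<le> D w"
proof -
  obtain C where C: "C \<inter> {v. D v = 0} = {0}" "\<forall>v. \<exists>k c. D k = 0 \<and> c \<in> C \<and> v = k + c"
    "\<forall>u\<in>C. \<forall>v\<in>C. D u * D v = r * G u v" and r: "r > 0"
    using cf unfolding conformality_factor_def by blast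
  obtain k c where kc: "D k = 0" "c \<in> C" "v0 = k + c" using C(2) by blast
  have Dc: "D c \<noteq> 0" using kc v0 by (simp add: linear_add[OF D])
  then have "c \<noteq> 0" using linear_0[OF D] by auto
  then have Gc: "G c c > 0" using G unfolding pdform_def by auto
  have "r * G c c = (D c)^2" using C(3) kc(2) by (simp add: power2_eq_square)
  also have "\<dots> \<le> D w * G c c" using rep_cs[OF G w] .
  finally show ?thesis using Gc by simp
qed

lemma zero_conformal:
  assumes G: "pdform G" and D: "\<forall>v. D v = 0"
  shows "conformality_factor G (\<lambda>a b. a * b) D 1"
  unfolding conformality_factor_def
proof (intro conjI exI[of _ "{0}"])
  have "D = (\<lambda>_. 0)" using D by auto
  then show "linear D" unfolding linear_iff by simp
  show "subspace {0::'a}" unfolding subspace_def by simp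
  show "\<forall>u\<in>{0}. \<forall>v\<in>{0}. D u * D v = 1 * G u v"
    using G D unfolding pdform_def by (simp add: bilinear_lzero)
qed (use D in auto)

lemma rep_transfer_le:
  assumes G1: "pdform G1" and w1: "\<forall>v. G1 w1 v = D1 v"
    and G2: "pdform G2" and w2: "\<forall>v. G2 w2 v = D2 v"
    and DT: "\<And>u. D2 u = D1 (T u)" and GT: "\<And>u v. G2 u v = G1 (T u) (T v)"
  shows "D2 w2 \<le> D1 w1"
proof -
  have "(D2 w2)^2 = (D1 (T w2))^2" using DT by simp
  also have "\<dots> \<le> D1 w1 * G1 (T w2) (T w2)" by (rule rep_cs[OF G1 w1])
  also have "\<dots> = D1 w1 * D2 w2" using GT w2 by simp
  finally have *: "(D2 w2)^2 \<le> D1 w1 * D2 w2" .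
  show ?thesis
  proof (cases "D2 w2 = 0")
    case True then show ?thesis using rep_val_nonneg[OF G1 w1] by simp
  next
    case False
    then have "D2 w2 > 0" using rep_val_nonneg[OF G2 w2] by simp
    then show ?thesis using * by (simp add: power2_eq_square)
  qed
qed


section \<open>Determinants and adjugates of smooth matrices\<close>

lemma smooth_det:
  fixes M :: "'a::euclidean_space \<Rightarrow> real mat"
  assumes U: "open U" and car: "\<And>y. M y \<in> carrier_mat n n"
    and sm: "\<And>i j. i < n \<Longrightarrow> j < n \<Longrightarrow> smooth_on U (\<lambda>y. M y $$ (i,j))"
  shows "smooth_on U (\<lambda>y. Determinant.det (M y))"
proof -
  have eq: "(\<lambda>y. Determinant.det (M y)) = (\<lambda>y. \<Sum>p\<in>{p. p permutes {0..<n}}. signof p * (\<Prod>i\<in>{0..<n}. M y $$ (i, p i)))"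
    using det_def'[OF car] by auto
  have "smooth_on U (\<lambda>y. \<Sum>p\<in>{p. p permutes {0..<n}}. signof p * (\<Prod>i\<in>{0..<n}. M y $$ (i, p i)))"
  proof (rule smooth_sum[OF U])
    fix p assume "p \<in> {p. p permutes {0..<n}}"
    then have p: "p permutes {0..<n}" by simp
    have "smooth_on U (\<lambda>y. \<Prod>i\<in>{0..<n}. M y $$ (i, p i))"
    proof (rule smooth_prod[OF U])
      fix i assume "i \<in> {0..<n}"
      then have "i < n" "p i < n" using permutes_in_image[OF p, of i] by auto
      then show "smooth_on U (\<lambda>y. M y $$ (i, p i))" by (rule sm)
    qed
    then show "smooth_on U (\<lambda>y. signof p * (\<Prod>i\<in>{0..<n}. M y $$ (i, p i)))"
      by (rule smooth_mult[OF smooth_const[OF U]])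
  qed
  then show ?thesis unfolding eq .
qed

lemma smooth_adj:
  fixes M :: "'a::euclidean_space \<Rightarrow> real mat"
  assumes U: "open U" and car: "\<And>y. M y \<in> carrier_mat n n"
    and sm: "\<And>i j. i < n \<Longrightarrow> j < n \<Longrightarrow> smooth_on U (\<lambda>y. M y $$ (i,j))"
    and ij: "i < n" "j < n"
  shows "smooth_on U (\<lambda>y. adj_mat (M y) $$ (i,j))"
proof -
  have dims: "dim_row (M y) = n" "dim_col (M y) = n" for y using car[of y] by auto
  have eq: "adj_mat (M y) $$ (i,j) = (-1)^(j+i) * Determinant.det (mat_delete (M y) j i)" for y
    unfolding adj_mat_def cofactor_def using ij dims by simp
  have "smooth_on U (\<lambda>y. Determinant.det (mat_delete (M y) j i))"
  proof (rule smooth_det[OF U])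
    show "mat_delete (M y) j i \<in> carrier_mat (n-1) (n-1)" for y
      using mat_delete_carrier[OF car] .
    fix i' j' assume "i' < n - 1" "j' < n - 1"
    then have "(\<lambda>y. mat_delete (M y) j i $$ (i', j')) =
       (\<lambda>y. M y $$ (if i' < j then i' else Suc i', if j' < i then j' else Suc j'))"
      unfolding mat_delete_def using dims by auto
    moreover have "smooth_on U (\<lambda>y. M y $$ (if i' < j then i' else Suc i', if j' < i then j' else Suc j'))"
      using \<open>i' < n - 1\<close> \<open>j' < n - 1\<close> by (intro sm) auto
    ultimately show "smooth_on U (\<lambda>y. mat_delete (M y) j i $$ (i', j'))" by simp
  qed
  then have "smooth_on U (\<lambda>y. (-1)^(j+i) * Determinant.det (mat_delete (M y) j i))"
    by (rule smooth_mult[OF smooth_const[OF U]])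
  then show ?thesis unfolding eq .
qed

section \<open>Solving for the gradient via the adjugate\<close>

definition bl :: "'e::euclidean_space list" where
  "bl = (SOME xs. distinct xs \<and> set xs = Basis)"

lemma bl: "distinct (bl::'e::euclidean_space list)" "set (bl::'e list) = Basis"
proof -
  have "\<exists>xs::'e list. distinct xs \<and> set xs = Basis" using finite_distinct_list[OF finite_Basis] by metis
  from someI_ex[OF this] show "distinct (bl::'e list)" "set (bl::'e list) = Basis" unfolding bl_def by auto
qed

lemma sum_Basis_bl: "(\<Sum>b\<in>(Basis::'e::euclidean_space set). f b) = (\<Sum>i=0..<length (bl::'e list). f (bl!i))"
proof -
  have "(\<Sum>b\<in>(Basis::'e set). f b) = sum_list (map f (bl::'e list))"
  proof -
    have e: "set (bl::'e list) = Basis" by (rule bl(2))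
    show ?thesis using sum_list_distinct_conv_sum_set[OF bl(1), of f] unfolding e by simp
  qed
  also have "\<dots> = (\<Sum>i=0..<length (bl::'e list). f (bl!i))"
    by (simp add: sum_list_sum_nth)
  finally show ?thesis .
qed

lemma bl_inner: "i < length (bl::'e::euclidean_space list) \<Longrightarrow> k < length (bl::'e list) \<Longrightarrow>
   inner (bl!i) ((bl::'e list)!k) = (if i = k then 1 else 0)"
  using bl inner_Basis[of "bl!i" "bl!k"] nth_eq_iff_index_eq[OF bl(1)] nth_mem by (metis (no_types, lifting))

lemma bl_expand: "v = (\<Sum>i=0..<length (bl::'e::euclidean_space list). inner v (bl!i) *\<^sub>R (bl::'e list)!i)"
  using euclidean_representation[of v] sum_Basis_bl[of "\<lambda>b. inner v b *\<^sub>R b"] by simp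

lemma bil_sum_left: "bilinear G \<Longrightarrow> G (\<Sum>i\<in>S. f i) y = (\<Sum>i\<in>S. G (f i) y)"
  unfolding bilinear_def using linear_sum[of "\<lambda>x. G x y"] by blast

lemma bil_sum_right: "bilinear G \<Longrightarrow> G y (\<Sum>i\<in>S. f i) = (\<Sum>i\<in>S. G y (f i))"
  unfolding bilinear_def using linear_sum[of "G y"] by blast

lemma bil_scale_left: "bilinear G \<Longrightarrow> G (c *\<^sub>R x) y = c * G x y"
  using bilinear_lmul by (metis real_scaleR_def)

lemma bil_scale_right: "bilinear G \<Longrightarrow> G y (c *\<^sub>R x) = c * G y x"
  using bilinear_rmul by (metis real_scaleR_def)

definition gmat :: "('e::euclidean_space \<Rightarrow> 'e \<Rightarrow> real) \<Rightarrow> real mat" where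
  "gmat G = mat (length (bl::'e list)) (length (bl::'e list)) (\<lambda>(i,j). G (bl!i) (bl!j))"

definition gcoef :: "('e::euclidean_space \<Rightarrow> 'e \<Rightarrow> real) \<Rightarrow> ('e \<Rightarrow> real) \<Rightarrow> nat \<Rightarrow> real" where
  "gcoef G D i = (\<Sum>j=0..<length (bl::'e list). adj_mat (gmat G) $$ (i,j) * D (bl!j)) / Determinant.det (gmat G)"

definition gvec :: "('e::euclidean_space \<Rightarrow> 'e \<Rightarrow> real) \<Rightarrow> ('e \<Rightarrow> real) \<Rightarrow> 'e" where
  "gvec G D = (\<Sum>i=0..<length (bl::'e list). gcoef G D i *\<^sub>R bl!i)"

definition gval :: "('e::euclidean_space \<Rightarrow> 'e \<Rightarrow> real) \<Rightarrow> ('e \<Rightarrow> real) \<Rightarrow> real" where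
  "gval G D = (\<Sum>i=0..<length (bl::'e list). gcoef G D i * D (bl!i))"

lemma gmat_carrier: "gmat (G::'e::euclidean_space \<Rightarrow> 'e \<Rightarrow> real) \<in> carrier_mat (length (bl::'e list)) (length (bl::'e list))"
  unfolding gmat_def by simp

lemma gmat_index: "i < length (bl::'e::euclidean_space list) \<Longrightarrow> j < length (bl::'e list) \<Longrightarrow>
  gmat (G::'e \<Rightarrow> 'e \<Rightarrow> real) $$ (i,j) = G (bl!i) (bl!j)"
  unfolding gmat_def by simp

lemma gval_eq: "linear D \<Longrightarrow> D (gvec G D) = gval G D"
  unfolding gvec_def gval_def by (simp add: linear_sum linear_scale)



lemma det_gmat_nz:
  fixes G :: "'e::euclidean_space \<Rightarrow> 'e \<Rightarrow> real"
  assumes G: "pdform G"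
  shows "Determinant.det (gmat G) \<noteq> 0"
proof
  let ?n = "length (bl::'e list)"
  have b: "bilinear G" using G unfolding pdform_def by auto
  assume "Determinant.det (gmat G) = 0"
  then obtain v where v: "v \<in> carrier_vec ?n" "v \<noteq> 0\<^sub>v ?n" "gmat G *\<^sub>v v = 0\<^sub>v ?n"
    using det_0_iff_vec_prod_zero[OF gmat_carrier] by blast
  define u where "u = (\<Sum>i=0..<?n. (v$i) *\<^sub>R (bl::'e list)!i)"
  have Mv: "(\<Sum>j=0..<?n. G (bl!i) (bl!j) * v$j) = 0" if i: "i < ?n" for i
  proof -
    have "(gmat G *\<^sub>v v) $ i = row (gmat G) i \<bullet> v" using i gmat_carrier[of G] by simp
    also have "\<dots> = (\<Sum>j=0..<?n. G (bl!i) (bl!j) * v$j)"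
      unfolding scalar_prod_def using v(1) i by (auto simp: gmat_def intro!: sum.cong)
    finally show ?thesis using v(3) i by simp
  qed
  have "G u u = (\<Sum>i=0..<?n. v$i * G (bl!i) u)"
    unfolding u_def by (simp add: bil_sum_left[OF b] bil_scale_left[OF b])
  also have "\<dots> = (\<Sum>i=0..<?n. v$i * (\<Sum>j=0..<?n. G (bl!i) (bl!j) * v$j))"
    unfolding u_def by (simp add: bil_sum_right[OF b] bil_scale_right[OF b] mult.commute)
  also have "\<dots> = 0" using Mv by simp
  finally have "u = 0" using pdform_zero[OF G] by blast
  have "v$k = 0" if k: "k < ?n" for k
  proof -
    have "inner u (bl!k) = (\<Sum>i=0..<?n. v$i * inner (bl!i) ((bl::'e list)!k))"
      unfolding u_def by (simp add: inner_sum_left)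
    also have "\<dots> = (\<Sum>i=0..<?n. if i = k then v$i else 0)"
    proof (rule sum.cong[OF refl])
      fix i assume "i \<in> {0..<?n}"
      then have i: "i < ?n" by simp
      show "v$i * inner (bl!i) ((bl::'e list)!k) = (if i = k then v$i else 0)"
        using bl_inner[OF i k] by simp
    qed
    also have "\<dots> = v$k" using k by simp
    finally show ?thesis using \<open>u = 0\<close> by simp
  qed
  then have "v = 0\<^sub>v ?n" using v(1) by (intro eq_vecI) auto
  with v(2) show False by simp
qed

lemma gvec_rep:
  fixes G :: "'e::euclidean_space \<Rightarrow> 'e \<Rightarrow> real"
  assumes G: "pdform G" and D: "linear D"
  shows "\<forall>v. G (gvec G D) v = D v"
proof -
  let ?n = "length (bl::'e list)"
  let ?M = "gmat G" and ?A = "adj_mat (gmat G)" and ?d = "Determinant.det (gmat G)"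
  have b: "bilinear G" and sym: "\<And>u v. G u v = G v u" using G unfolding pdform_def by auto
  have dnz: "?d \<noteq> 0" by (rule det_gmat_nz[OF G])
  have Acar: "?A \<in> carrier_mat ?n ?n" using adj_mat(1)[OF gmat_carrier] .
  have MA: "(\<Sum>i=0..<?n. ?M $$ (k,i) * ?A $$ (i,j)) = (if k = j then ?d else 0)"
    if k: "k < ?n" and j: "j < ?n" for k j
  proof -
    have "(?M * ?A) $$ (k,j) = row ?M k \<bullet> col ?A j" using k j gmat_carrier[of G] Acar by simp
    also have "\<dots> = (\<Sum>i=0..<?n. ?M $$ (k,i) * ?A $$ (i,j))"
      unfolding scalar_prod_def using k j gmat_carrier[of G] Acar by simp
    finally have "(\<Sum>i=0..<?n. ?M $$ (k,i) * ?A $$ (i,j)) = (?M * ?A) $$ (k,j)" by simp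
    also have "\<dots> = (?d \<cdot>\<^sub>m 1\<^sub>m ?n) $$ (k,j)" using adj_mat(2)[OF gmat_carrier[of G]] by simp
    also have "\<dots> = (if k = j then ?d else 0)" using k j by simp
    finally show ?thesis .
  qed
  have basis: "G (gvec G D) (bl!k) = D (bl!k)" if k: "k < ?n" for k
  proof -
    have "G (gvec G D) (bl!k) = (\<Sum>i=0..<?n. gcoef G D i * G (bl!i) ((bl::'e list)!k))"
      unfolding gvec_def by (simp add: bil_sum_left[OF b] bil_scale_left[OF b])
    also have "\<dots> = (\<Sum>i=0..<?n. (\<Sum>j=0..<?n. ?A $$ (i,j) * D (bl!j)) / ?d * ?M $$ (k,i))"
    proof (rule sum.cong[OF refl])
      fix i assume "i \<in> {0..<?n}"
      then have i: "i < ?n" by simp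
      show "gcoef G D i * G (bl!i) ((bl::'e list)!k) = (\<Sum>j=0..<?n. ?A $$ (i,j) * D (bl!j)) / ?d * ?M $$ (k,i)"
        unfolding gcoef_def gmat_index[OF k i] using sym by simp
    qed
    also have "\<dots> = (\<Sum>i=0..<?n. \<Sum>j=0..<?n. D (bl!j) * (?M $$ (k,i) * ?A $$ (i,j)) / ?d)"
    proof (rule sum.cong[OF refl])
      fix i
      have "(\<Sum>j=0..<?n. ?A $$ (i,j) * D (bl!j)) / ?d * ?M $$ (k,i) =
            (\<Sum>j=0..<?n. ?A $$ (i,j) * D (bl!j) / ?d * ?M $$ (k,i))"
        by (simp add: sum_divide_distrib sum_distrib_right)
      also have "\<dots> = (\<Sum>j=0..<?n. D (bl!j) * (?M $$ (k,i) * ?A $$ (i,j)) / ?d)"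
        by (rule sum.cong[OF refl]) (simp add: field_simps)
      finally show "(\<Sum>j=0..<?n. ?A $$ (i,j) * D (bl!j)) / ?d * ?M $$ (k,i) =
            (\<Sum>j=0..<?n. D (bl!j) * (?M $$ (k,i) * ?A $$ (i,j)) / ?d)" .
    qed
    also have "\<dots> = (\<Sum>j=0..<?n. D (bl!j) * (\<Sum>i=0..<?n. ?M $$ (k,i) * ?A $$ (i,j)) / ?d)"
      by (subst sum.swap) (simp add: sum_divide_distrib sum_distrib_left)
    also have "\<dots> = (\<Sum>j=0..<?n. if j = k then D (bl!j) else 0)"
      by (rule sum.cong) (use MA k dnz in auto)
    also have "\<dots> = D (bl!k)" using k by simp
    finally show ?thesis .
  qed
  show ?thesis
  proof
    fix v
    have "G (gvec G D) v = G (gvec G D) (\<Sum>i=0..<?n. inner v (bl!i) *\<^sub>R (bl::'e list)!i)"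
      using bl_expand[of v] by simp
    also have "\<dots> = (\<Sum>i=0..<?n. inner v (bl!i) * D ((bl::'e list)!i))"
      by (simp add: bil_sum_right[OF b] bil_scale_right[OF b] basis)
    also have "\<dots> = D (\<Sum>i=0..<?n. inner v (bl!i) *\<^sub>R (bl::'e list)!i)"
      by (simp add: linear_sum[OF D] linear_scale[OF D])
    also have "\<dots> = D v" using bl_expand[of v] by simp
    finally show "G (gvec G D) v = D v" .
  qed
qed



context
  fixes X :: "'m topology" and A :: "('m, 'e::euclidean_space) chart set"
    and g :: "('m, 'e) chart \<Rightarrow> 'e \<Rightarrow> 'e \<Rightarrow> 'e \<Rightarrow> real"
  assumes RM: "riemannian_manifold X A g"
begin

lemma SM: "smooth_manifold X A" using RM unfolding riemannian_manifold_def by blast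
lemma RMet: "riemannian_metric X A g" using RM unfolding riemannian_manifold_def by blast

lemma top_cover: "topspace X = (\<Union>c\<in>A. fst c)"
  using SM unfolding smooth_manifold_def by blast

lemma chart_openin: "c \<in> A \<Longrightarrow> openin X (fst c)"
  using SM unfolding smooth_manifold_def by blast

lemma chart_open: "c \<in> A \<Longrightarrow> open (snd c ` fst c)"
  using SM unfolding smooth_manifold_def by blast

lemma chart_homeo: "c \<in> A \<Longrightarrow> homeomorphic_map (subtopology X (fst c)) (top_of_set (snd c ` fst c)) (snd c)"
  using SM unfolding smooth_manifold_def by blast

lemma chart_trans: "c \<in> A \<Longrightarrow> d \<in> A \<Longrightarrow> smooth_on (snd d ` (fst c \<inter> fst d)) (snd c \<circ> chart_inv d)"
  using SM unfolding smooth_manifold_def by blast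

lemma chart_sub: "c \<in> A \<Longrightarrow> fst c \<subseteq> topspace X"
  using chart_openin openin_subset by blast

lemma chart_inj: "c \<in> A \<Longrightarrow> inj_on (snd c) (fst c)"
  using homeomorphic_imp_injective_map[OF chart_homeo] chart_sub by (simp add: Int_absorb1)

lemma chart_inv_snd: "c \<in> A \<Longrightarrow> p \<in> fst c \<Longrightarrow> chart_inv c (snd c p) = p"
  unfolding chart_inv_def using chart_inj inv_into_f_f by metis

lemma chart_inv_in: "y \<in> snd c ` fst c \<Longrightarrow> chart_inv c y \<in> fst c"
  unfolding chart_inv_def by (rule inv_into_into)

lemma snd_chart_inv: "y \<in> snd c ` fst c \<Longrightarrow> snd c (chart_inv c y) = y"
  unfolding chart_inv_def by (rule f_inv_into_f)

lemma chart_preimage: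
  assumes c: "c \<in> A" and W: "open W"
  shows "openin X {p \<in> fst c. snd c p \<in> W}"
proof -
  have cm: "continuous_map (subtopology X (fst c)) (top_of_set (snd c ` fst c)) (snd c)"
    by (rule homeomorphic_imp_continuous_map[OF chart_homeo[OF c]])
  have "openin (subtopology X (fst c)) {p \<in> topspace (subtopology X (fst c)). snd c p \<in> snd c ` fst c \<inter> W}"
    by (rule openin_continuous_map_preimage[OF cm openin_open_Int[OF W]])
  moreover have "{p \<in> topspace (subtopology X (fst c)). snd c p \<in> snd c ` fst c \<inter> W} = {p \<in> fst c. snd c p \<in> W}"
    using chart_sub[OF c] by auto
  ultimately show ?thesis using openin_trans_full chart_openin[OF c] by metis
qed

lemma metric_pd: "c \<in> A \<Longrightarrow> y \<in> snd c ` fst c \<Longrightarrow> pdform (g c y)"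
  using RMet unfolding riemannian_metric_def pdform_def by blast

lemma metric_smooth: "c \<in> A \<Longrightarrow> smooth_on (snd c ` fst c) (\<lambda>y. g c y u v)"
  using RMet unfolding riemannian_metric_def by blast

lemma metric_compat: "c \<in> A \<Longrightarrow> d \<in> A \<Longrightarrow> p \<in> fst c \<inter> fst d \<Longrightarrow>
        g d (snd d p) u v =
        g c (snd c p) (frechet_derivative (snd c \<circ> chart_inv d) (at (snd d p)) u)
                      (frechet_derivative (snd c \<circ> chart_inv d) (at (snd d p)) v)"
  using RMet unfolding riemannian_metric_def by blast

end


definition Dch :: "('m \<Rightarrow> real) \<Rightarrow> ('m, 'e::euclidean_space) chart \<Rightarrow> 'e \<Rightarrow> 'e \<Rightarrow> real" where
  "Dch f c y = frechet_derivative (f \<circ> chart_inv c) (at y)"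

definition Lch :: "(('m, 'e::euclidean_space) chart \<Rightarrow> 'e \<Rightarrow> 'e \<Rightarrow> 'e \<Rightarrow> real) \<Rightarrow> ('m \<Rightarrow> real) \<Rightarrow> ('m, 'e) chart \<Rightarrow> 'e \<Rightarrow> real" where
  "Lch g f c y = gval (g c y) (Dch f c y)"

context
  fixes X :: "'m topology" and A :: "('m, 'e::euclidean_space) chart set"
    and g :: "('m, 'e) chart \<Rightarrow> 'e \<Rightarrow> 'e \<Rightarrow> 'e \<Rightarrow> real"
    and f :: "'m \<Rightarrow> real"
  assumes RM: "riemannian_manifold X A g" and SF: "smooth_fun A f"
begin

lemma h_smooth: "c \<in> A \<Longrightarrow> smooth_on (snd c ` fst c) (f \<circ> chart_inv c)"
  using SF unfolding smooth_fun_def by blast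

lemma h_diff: "c \<in> A \<Longrightarrow> y \<in> snd c ` fst c \<Longrightarrow> (f \<circ> chart_inv c) differentiable at y"
  using smooth_on_differentiable_at[OF h_smooth] by blast

lemma h_hasderiv: "c \<in> A \<Longrightarrow> y \<in> snd c ` fst c \<Longrightarrow> ((f \<circ> chart_inv c) has_derivative Dch f c y) (at y)"
  unfolding Dch_def using h_diff frechet_derivative_works by blast

lemma D_linear: "c \<in> A \<Longrightarrow> y \<in> snd c ` fst c \<Longrightarrow> linear (Dch f c y)"
  using h_hasderiv has_derivative_linear by blast

lemma D_rep: "c \<in> A \<Longrightarrow> y \<in> snd c ` fst c \<Longrightarrow> \<forall>v. g c y (gvec (g c y) (Dch f c y)) v = Dch f c y v"
  using gvec_rep[OF metric_pd[OF RM] D_linear] by blast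

lemma L_eq: "c \<in> A \<Longrightarrow> y \<in> snd c ` fst c \<Longrightarrow> Dch f c y (gvec (g c y) (Dch f c y)) = Lch g f c y"
  unfolding Lch_def using gval_eq[OF D_linear] by blast

lemma grad_eq: assumes c: "c \<in> A" and x: "x \<in> fst c"
  shows "grad g f c x = gvec (g c (snd c x)) (Dch f c (snd c x))"
proof -
  have y: "snd c x \<in> snd c ` fst c" using x by simp
  have d: "dfun f c x = Dch f c (snd c x)" unfolding dfun_def Dch_def ..
  show ?thesis unfolding grad_def d
  proof (rule the_equality)
    show "\<forall>v. g c (snd c x) (gvec (g c (snd c x)) (Dch f c (snd c x))) v = Dch f c (snd c x) v"
      by (rule D_rep[OF c y])
    fix w assume "\<forall>v. g c (snd c x) w v = Dch f c (snd c x) v"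
    from rep_unique[OF metric_pd[OF RM c y] this D_rep[OF c y]]
    show "w = gvec (g c (snd c x)) (Dch f c (snd c x))" .
  qed
qed

lemma L_nonneg: "c \<in> A \<Longrightarrow> y \<in> snd c ` fst c \<Longrightarrow> Lch g f c y \<ge> 0"
  using rep_val_nonneg[OF metric_pd[OF RM] D_rep] L_eq by metis

lemma L_zero_iff: assumes c: "c \<in> A" and y: "y \<in> snd c ` fst c"
  shows "Lch g f c y = 0 \<longleftrightarrow> (\<forall>v. Dch f c y v = 0)"
proof -
  let ?w = "gvec (g c y) (Dch f c y)"
  have pd: "pdform (g c y)" by (rule metric_pd[OF RM c y])
  have r: "\<forall>v. g c y ?w v = Dch f c y v" by (rule D_rep[OF c y])
  have "Lch g f c y = g c y ?w ?w" using L_eq[OF c y] r by simp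
  then have "Lch g f c y = 0 \<longleftrightarrow> ?w = 0"
    using pdform_zero[OF pd] pd unfolding pdform_def by (metis bilinear_lzero)
  then show ?thesis using rep_zero_iff[OF pd r] by simp
qed

lemma L_smooth: assumes c: "c \<in> A" shows "smooth_on (snd c ` fst c) (Lch g f c)"
proof -
  let ?V = "snd c ` fst c" and ?n = "length (bl::'e list)"
  have V: "open ?V" by (rule chart_open[OF RM c])
  have car: "\<And>y. gmat (g c y) \<in> carrier_mat ?n ?n" by (rule gmat_carrier)
  have ent: "smooth_on ?V (\<lambda>y. gmat (g c y) $$ (i,j))" if "i < ?n" "j < ?n" for i j
  proof -
    have "(\<lambda>y. gmat (g c y) $$ (i,j)) = (\<lambda>y. g c y (bl!i) (bl!j))"
      using gmat_index[OF that] by auto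
    then show ?thesis using metric_smooth[OF RM c] by simp
  qed
  have Ds: "smooth_on ?V (\<lambda>y. Dch f c y v)" for v
    unfolding Dch_def by (rule smooth_on_deriv[OF h_smooth[OF c]])
  have dets: "smooth_on ?V (\<lambda>y. Determinant.det (gmat (g c y)))"
    by (rule smooth_det[OF V car ent])
  have detnz: "Determinant.det (gmat (g c y)) \<noteq> 0" if "y \<in> ?V" for y
    by (rule det_gmat_nz[OF metric_pd[OF RM c that]])
  have coef: "smooth_on ?V (\<lambda>y. gcoef (g c y) (Dch f c y) i)" if i: "i < ?n" for i
    unfolding gcoef_def
  proof (rule smooth_divide[OF _ dets detnz])
    show "smooth_on ?V (\<lambda>y. \<Sum>j = 0..<?n. adj_mat (gmat (g c y)) $$ (i, j) * Dch f c y (bl ! j))"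
    proof (rule smooth_sum[OF V])
      fix j assume "j \<in> {0..<?n}"
      then have j: "j < ?n" by simp
      show "smooth_on ?V (\<lambda>y. adj_mat (gmat (g c y)) $$ (i, j) * Dch f c y (bl ! j))"
        by (rule smooth_mult[OF smooth_adj[OF V car ent i j] Ds])
    qed
  qed
  have "smooth_on ?V (\<lambda>y. \<Sum>i = 0..<?n. gcoef (g c y) (Dch f c y) i * Dch f c y (bl ! i))"
  proof (rule smooth_sum[OF V])
    fix i assume "i \<in> {0..<?n}"
    then have i: "i < ?n" by simp
    show "smooth_on ?V (\<lambda>y. gcoef (g c y) (Dch f c y) i * Dch f c y (bl ! i))"
      by (rule smooth_mult[OF coef[OF i] Ds])
  qed
  moreover have "Lch g f c = (\<lambda>y. \<Sum>i = 0..<?n. gcoef (g c y) (Dch f c y) i * Dch f c y (bl ! i))"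
    unfolding Lch_def gval_def by auto
  ultimately show ?thesis by simp
qed

lemma D_chain:
  assumes c: "c \<in> A" and d: "d \<in> A" and p: "p \<in> fst c \<inter> fst d"
  shows "Dch f d (snd d p) u = Dch f c (snd c p) (frechet_derivative (snd c \<circ> chart_inv d) (at (snd d p)) u)"
proof -
  let ?O = "snd d ` (fst c \<inter> fst d)" and ?tau = "snd c \<circ> chart_inv d" and ?y0 = "snd d p"
  have tsm: "smooth_on ?O ?tau" by (rule chart_trans[OF RM c d])
  have O: "open ?O" by (rule smooth_on_open[OF tsm])
  have y0: "?y0 \<in> ?O" using p by simp
  have t0: "?tau ?y0 = snd c p" using chart_inv_snd[OF RM d] p by simp
  have "?tau differentiable at ?y0" by (rule smooth_on_differentiable_at[OF tsm y0])
  then have td: "(?tau has_derivative frechet_derivative ?tau (at ?y0)) (at ?y0)"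
    using frechet_derivative_works by blast
  have hd: "((f \<circ> chart_inv c) has_derivative Dch f c (snd c p)) (at (?tau ?y0))"
    unfolding t0 using h_hasderiv[OF c] p by simp
  have comp: "((f \<circ> chart_inv c) \<circ> ?tau has_derivative Dch f c (snd c p) \<circ> frechet_derivative ?tau (at ?y0)) (at ?y0)"
    by (rule diff_chain_at[OF td hd])
  have eq: "((f \<circ> chart_inv c) \<circ> ?tau) y = (f \<circ> chart_inv d) y" if yO: "y \<in> ?O" for y
  proof -
    obtain q where q: "q \<in> fst c \<inter> fst d" "y = snd d q" using yO by blast
    then show ?thesis using chart_inv_snd[OF RM d, of q] chart_inv_snd[OF RM c, of q] by simp
  qed
  have "((f \<circ> chart_inv d) has_derivative Dch f c (snd c p) \<circ> frechet_derivative ?tau (at ?y0)) (at ?y0)"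
    by (rule has_derivative_transform_within_open[OF comp O y0 eq])
  moreover have "((f \<circ> chart_inv d) has_derivative Dch f d ?y0) (at ?y0)"
    using h_hasderiv[OF d] p by simp
  ultimately have "Dch f d ?y0 = Dch f c (snd c p) \<circ> frechet_derivative ?tau (at ?y0)"
    using has_derivative_unique by blast
  then show ?thesis by simp
qed

lemma L_le:
  assumes c: "c \<in> A" and d: "d \<in> A" and p: "p \<in> fst c \<inter> fst d"
  shows "Lch g f d (snd d p) \<le> Lch g f c (snd c p)"
proof -
  have yc: "snd c p \<in> snd c ` fst c" and yd: "snd d p \<in> snd d ` fst d" using p by auto
  have "Dch f d (snd d p) (gvec (g d (snd d p)) (Dch f d (snd d p)))
        \<le> Dch f c (snd c p) (gvec (g c (snd c p)) (Dch f c (snd c p)))"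
    by (rule rep_transfer_le[OF metric_pd[OF RM c yc] D_rep[OF c yc] metric_pd[OF RM d yd] D_rep[OF d yd]
          D_chain[OF c d p] metric_compat[OF RM c d p]])
  then show ?thesis using L_eq[OF c yc] L_eq[OF d yd] by simp
qed

lemma L_indep:
  assumes c: "c \<in> A" and d: "d \<in> A" and p: "p \<in> fst c" "p \<in> fst d"
  shows "Lch g f c (snd c p) = Lch g f d (snd d p)"
  using L_le[OF c d] L_le[OF d c] p by (meson IntI order_antisym)

end



lemma locally_constant_connected:
  assumes CS: "connected_space X"
    and loc: "\<And>x. x \<in> topspace X \<Longrightarrow> \<exists>N. openin X N \<and> x \<in> N \<and> (\<forall>p\<in>N. f p = f x)"
  shows "\<exists>k. \<forall>x\<in>topspace X. f x = k"
proof (cases "topspace X = {}")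
  case True then show ?thesis by simp
next
  case False
  then obtain x0 where x0: "x0 \<in> topspace X" by blast
  define S where "S = {x \<in> topspace X. f x = f x0}"
  have Ssub: "S \<subseteq> topspace X" unfolding S_def by blast
  have o1: "openin X S" unfolding openin_subopen[of X S]
  proof
    fix x assume xS: "x \<in> S"
    then have xt: "x \<in> topspace X" and fx: "f x = f x0" unfolding S_def by auto
    obtain N where N: "openin X N" "x \<in> N" "\<forall>p\<in>N. f p = f x" using loc[OF xt] by blast
    have "N \<subseteq> S"
    proof
      fix p assume p: "p \<in> N"
      have "p \<in> topspace X" using openin_subset[OF N(1)] p by blast
      moreover have "f p = f x0" using N(3) p fx by simp
      ultimately show "p \<in> S" unfolding S_def by simp
    qed
    then show "\<exists>T. openin X T \<and> x \<in> T \<and> T \<subseteq> S" using N(1,2) by blast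
  qed
  have o2: "openin X (topspace X - S)" unfolding openin_subopen[of X "topspace X - S"]
  proof
    fix x assume xS: "x \<in> topspace X - S"
    then have xt: "x \<in> topspace X" and fx: "f x \<noteq> f x0" unfolding S_def by auto
    obtain N where N: "openin X N" "x \<in> N" "\<forall>p\<in>N. f p = f x" using loc[OF xt] by blast
    have "N \<subseteq> topspace X - S"
    proof
      fix p assume p: "p \<in> N"
      have "p \<in> topspace X" using openin_subset[OF N(1)] p by blast
      moreover have "f p \<noteq> f x0" using N(3) p fx by simp
      ultimately show "p \<in> topspace X - S" unfolding S_def by simp
    qed
    then show "\<exists>T. openin X T \<and> x \<in> T \<and> T \<subseteq> topspace X - S" using N(1,2) by blast
  qed
  have c1: "closedin X S" unfolding closedin_def using Ssub o2 by (rule conjI)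
  have "S = {} \<or> S = topspace X"
    using connected_space_clopen_in[THEN iffD1, OF CS, rule_format, OF conjI[OF o1 c1]] .
  moreover have "x0 \<in> S" using x0 unfolding S_def by simp
  ultimately have "S = topspace X" by blast
  then show ?thesis unfolding S_def by blast
qed

theorem mainTheorem1:
  fixes X :: "'m topology"
    and A :: "('m, 'e::euclidean_space) chart set"
    and g :: "('m, 'e) chart \<Rightarrow> 'e \<Rightarrow> 'e \<Rightarrow> 'e \<Rightarrow> real"
    and f :: "'m \<Rightarrow> real"
  assumes "riemannian_manifold X A g"
    and "connected_space X"
    and "smooth_fun A f"
  shows "conformal_riemannian_morphism_real X A g f \<longleftrightarrow>
           ((\<exists>k. \<forall>x\<in>topspace X. f x = k) \<or>
            (\<forall>x\<in>topspace X. \<forall>c\<in>A. x \<in> fst c \<longrightarrow> grad g f c x \<noteq> 0))"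
proof -
  note RM = assms(1) and CS = assms(2) and SF = assms(3)
  have dfun_eq: "dfun f c x = Dch f c (snd c x)" for c x unfolding dfun_def Dch_def ..
  have gradL: "grad g f c x = 0 \<longleftrightarrow> Lch g f c (snd c x) = 0" if c: "c \<in> A" and x: "x \<in> fst c" for c x
  proof -
    have y: "snd c x \<in> snd c ` fst c" using x by simp
    show ?thesis
      unfolding grad_eq[OF RM SF c x] L_zero_iff[OF RM SF c y]
      using rep_zero_iff[OF metric_pd[OF RM c y] D_rep[OF RM SF c y]] by simp
  qed
  show ?thesis
  proof
    assume "conformal_riemannian_morphism_real X A g f"
    then obtain \<Lambda> where Ls: "smooth_fun A \<Lambda>" and Lp: "\<forall>x\<in>topspace X. \<Lambda> x > 0"
      and Lc: "\<forall>x\<in>topspace X. \<forall>c\<in>A. x \<in> fst c \<longrightarrow>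
           conformality_factor (g c (snd c x)) (\<lambda>a b. a * b) (dfun f c x) (\<Lambda> x)"
      unfolding conformal_riemannian_morphism_real_def by blast
    define Z where "Z = {x \<in> topspace X. \<forall>c\<in>A. x \<in> fst c \<longrightarrow> Lch g f c (snd c x) = 0}"
    have key: "\<Lambda> p \<le> Lch g f c (snd c p)" if c: "c \<in> A" and p: "p \<in> fst c" and nz: "Lch g f c (snd c p) \<noteq> 0" for c p
    proof -
      have y: "snd c p \<in> snd c ` fst c" using p by simp
      have "\<not> (\<forall>v. Dch f c (snd c p) v = 0)" using nz L_zero_iff[OF RM SF c y] by simp
      then obtain v0 where v0: "Dch f c (snd c p) v0 \<noteq> 0" by blast
      have pt: "p \<in> topspace X" using chart_sub[OF RM c] p by blast
      have cf: "conformality_factor (g c (snd c p)) (\<lambda>a b. a * b) (Dch f c (snd c p)) (\<Lambda> p)"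
        using Lc[rule_format, OF pt c p] unfolding dfun_eq .
      from rep_conformal_le[OF metric_pd[OF RM c y] D_rep[OF RM SF c y] D_linear[OF RM SF c y] cf v0]
      show ?thesis using L_eq[OF RM SF c y] by simp
    qed
    have Zopen: "openin X Z" unfolding openin_subopen[of X Z]
    proof
      fix x assume xZ: "x \<in> Z"
      then have xt: "x \<in> topspace X" unfolding Z_def by blast
      then obtain c where c: "c \<in> A" and x: "x \<in> fst c" using top_cover[OF RM] by blast
      let ?V = "snd c ` fst c"
      let ?F = "\<lambda>y. \<Lambda> (chart_inv c y) - Lch g f c y"
      have V: "open ?V" by (rule chart_open[OF RM c])
      have "smooth_on ?V (\<Lambda> \<circ> chart_inv c)" using Ls c unfolding smooth_fun_def by blast
      then have "continuous_on ?V (\<Lambda> \<circ> chart_inv c)" by (rule smooth_on_continuous)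
      then have "continuous_on ?V ?F"
        using smooth_on_continuous[OF L_smooth[OF RM SF c]] by (intro continuous_on_diff) (auto simp: o_def)
      then have W: "open (?V \<inter> ?F -` {0<..})" by (rule continuous_open_preimage[OF _ V open_greaterThan])
      define N where "N = {p \<in> fst c. snd c p \<in> ?V \<inter> ?F -` {0<..}}"
      have "openin X N" unfolding N_def by (rule chart_preimage[OF RM c W])
      moreover have "x \<in> N"
      proof -
        have "Lch g f c (snd c x) = 0" using xZ c x unfolding Z_def by blast
        moreover have "\<Lambda> (chart_inv c (snd c x)) > 0" using chart_inv_snd[OF RM c x] Lp xt by simp
        ultimately show ?thesis unfolding N_def using x by simp
      qed
      moreover have "N \<subseteq> Z"
      proof
        fix p assume "p \<in> N"
        then have p: "p \<in> fst c" and Fp0: "?F (snd c p) > 0"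
          unfolding N_def by auto
        then have Fp: "\<Lambda> p - Lch g f c (snd c p) > 0" using chart_inv_snd[OF RM c p] by simp
        have L0: "Lch g f c (snd c p) = 0"
        proof (rule ccontr)
          assume "Lch g f c (snd c p) \<noteq> 0"
          from key[OF c p this] Fp show False by simp
        qed
        have pt: "p \<in> topspace X" using chart_sub[OF RM c] p by blast
        have "\<forall>d\<in>A. p \<in> fst d \<longrightarrow> Lch g f d (snd d p) = 0"
        proof (intro ballI impI)
          fix d assume d: "d \<in> A" and pd: "p \<in> fst d"
          show "Lch g f d (snd d p) = 0" using L_indep[OF RM SF c d p pd] L0 by simp
        qed
        then show "p \<in> Z" unfolding Z_def using pt by blast
      qed
      ultimately show "\<exists>T. openin X T \<and> x \<in> T \<and> T \<subseteq> Z" by blast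
    qed
    have Zclosed: "closedin X Z" unfolding closedin_def
    proof
      show "Z \<subseteq> topspace X" unfolding Z_def by blast
      show "openin X (topspace X - Z)" unfolding openin_subopen[of X "topspace X - Z"]
      proof
        fix x assume xZ: "x \<in> topspace X - Z"
        then obtain c where c: "c \<in> A" and x: "x \<in> fst c" and nz: "Lch g f c (snd c x) \<noteq> 0"
          unfolding Z_def by blast
        let ?V = "snd c ` fst c"
        have V: "open ?V" by (rule chart_open[OF RM c])
        have W: "open (?V \<inter> Lch g f c -` (-{0}))"
          by (rule continuous_open_preimage[OF smooth_on_continuous[OF L_smooth[OF RM SF c]] V])
             (simp add: open_Compl)
        define N where "N = {p \<in> fst c. snd c p \<in> ?V \<inter> Lch g f c -` (-{0})}"
        have "openin X N" unfolding N_def by (rule chart_preimage[OF RM c W])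
        moreover have "x \<in> N" unfolding N_def using x nz by simp
        moreover have "N \<subseteq> topspace X - Z"
        proof
          fix p assume "p \<in> N"
          then have p: "p \<in> fst c" and Lp0: "Lch g f c (snd c p) \<noteq> 0" unfolding N_def by auto
          have "p \<in> topspace X" using chart_sub[OF RM c] p by blast
          moreover have "p \<notin> Z" unfolding Z_def using c p Lp0 by blast
          ultimately show "p \<in> topspace X - Z" by blast
        qed
        ultimately show "\<exists>T. openin X T \<and> x \<in> T \<and> T \<subseteq> topspace X - Z" by blast
      qed
    qed
    have "Z = {} \<or> Z = topspace X"
      using connected_space_clopen_in[THEN iffD1, OF CS, rule_format, OF conjI[OF Zopen Zclosed]] .
    then show "(\<exists>k. \<forall>x\<in>topspace X. f x = k) \<or> (\<forall>x\<in>topspace X. \<forall>c\<in>A. x \<in> fst c \<longrightarrow> grad g f c x \<noteq> 0)"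
    proof
      assume Z0: "Z = {}"
      have "grad g f c x \<noteq> 0" if xt: "x \<in> topspace X" and c: "c \<in> A" and x: "x \<in> fst c" for x c
      proof -
        have "x \<notin> Z" using Z0 by simp
        then obtain d where d: "d \<in> A" "x \<in> fst d" "Lch g f d (snd d x) \<noteq> 0" using xt unfolding Z_def by blast
        then have "Lch g f c (snd c x) \<noteq> 0" using L_indep[OF RM SF c d(1) x d(2)] by simp
        then show ?thesis using gradL[OF c x] by simp
      qed
      then show ?thesis by blast
    next
      assume Zt: "Z = topspace X"
      have allD: "Dch f c y v = 0" if c: "c \<in> A" and y: "y \<in> snd c ` fst c" for c y v
      proof -
        have "chart_inv c y \<in> fst c" by (rule chart_inv_in[OF RM y])
        then have "chart_inv c y \<in> Z" using Zt chart_sub[OF RM c] by blast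
        then have "Lch g f c (snd c (chart_inv c y)) = 0" using c \<open>chart_inv c y \<in> fst c\<close> unfolding Z_def by blast
        then have "Lch g f c y = 0" using snd_chart_inv[OF RM y] by simp
        then show ?thesis using L_zero_iff[OF RM SF c y] by blast
      qed
      have loc: "\<exists>N. openin X N \<and> x \<in> N \<and> (\<forall>p\<in>N. f p = f x)" if xt: "x \<in> topspace X" for x
      proof -
        obtain c where c: "c \<in> A" and x: "x \<in> fst c" using top_cover[OF RM] xt by blast
        let ?V = "snd c ` fst c" and ?h = "f \<circ> chart_inv c"
        have "open ?V" by (rule chart_open[OF RM c])
        moreover have "snd c x \<in> ?V" using x by simp
        ultimately obtain r where r: "r > 0" "ball (snd c x) r \<subseteq> ?V" by (rule openE)
        have "(?h has_derivative (\<lambda>h. 0)) (at y within ball (snd c x) r)" if "y \<in> ball (snd c x) r" for y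
        proof -
          have yV: "y \<in> ?V" using that r by blast
          have "Dch f c y = (\<lambda>h. 0)" using allD[OF c yV] by auto
          then show ?thesis using h_hasderiv[OF RM SF c yV] by (simp add: has_derivative_at_withinI)
        qed
        from has_derivative_zero_constant[OF convex_ball this]
        obtain k where k: "\<forall>y\<in>ball (snd c x) r. ?h y = k" by blast
        define N where "N = {p \<in> fst c. snd c p \<in> ball (snd c x) r}"
        have "openin X N" unfolding N_def by (rule chart_preimage[OF RM c open_ball])
        moreover have "x \<in> N" unfolding N_def using x r by simp
        moreover have "\<forall>p\<in>N. f p = f x"
        proof
          fix p assume "p \<in> N"
          then have p: "p \<in> fst c" "snd c p \<in> ball (snd c x) r" unfolding N_def by auto
          have "f p = ?h (snd c p)" using chart_inv_snd[OF RM c p(1)] by simp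
          also have "\<dots> = k" using k p(2) by blast
          also have "\<dots> = ?h (snd c x)" using k r by simp
          also have "\<dots> = f x" using chart_inv_snd[OF RM c x] by simp
          finally show "f p = f x" .
        qed
        ultimately show ?thesis by blast
      qed
      show ?thesis using locally_constant_connected[OF CS loc] by blast
    qed
  next
    assume "(\<exists>k. \<forall>x\<in>topspace X. f x = k) \<or> (\<forall>x\<in>topspace X. \<forall>c\<in>A. x \<in> fst c \<longrightarrow> grad g f c x \<noteq> 0)"
    then show "conformal_riemannian_morphism_real X A g f"
    proof
      assume "\<exists>k. \<forall>x\<in>topspace X. f x = k"
      then obtain k where k: "\<forall>x\<in>topspace X. f x = k" by blast
      have D0: "\<forall>v. Dch f c y v = 0" if c: "c \<in> A" and y: "y \<in> snd c ` fst c" for c y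
      proof -
        have V: "open (snd c ` fst c)" by (rule chart_open[OF RM c])
        have "(f \<circ> chart_inv c) y' = (\<lambda>_. k) y'" if "y' \<in> snd c ` fst c" for y'
          using chart_inv_in[OF RM that] chart_sub[OF RM c] k by auto
        then have "Dch f c y = frechet_derivative (\<lambda>_. k) (at y)"
          unfolding Dch_def by (rule fd_cong_open[OF V y])
        also have "\<dots> = (\<lambda>_. 0)" by (rule frechet_derivative_at[OF has_derivative_const, symmetric])
        finally show ?thesis by simp
      qed
      show ?thesis unfolding conformal_riemannian_morphism_real_def
      proof (intro conjI SF exI[of _ "\<lambda>_. 1"] ballI impI)
        show "smooth_fun A (\<lambda>_. 1::real)" unfolding smooth_fun_def
          using chart_open[OF RM] by (auto simp: o_def intro: smooth_const)
        fix x assume "x \<in> topspace X"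
        show "(0::real) < 1" by simp
        fix c assume c: "c \<in> A" and x: "x \<in> fst c"
        have y: "snd c x \<in> snd c ` fst c" using x by simp
        show "conformality_factor (g c (snd c x)) (\<lambda>a b. a * b) (dfun f c x) 1"
          unfolding dfun_eq by (rule zero_conformal[OF metric_pd[OF RM c y] D0[OF c y]])
      qed
    next
      assume G: "\<forall>x\<in>topspace X. \<forall>c\<in>A. x \<in> fst c \<longrightarrow> grad g f c x \<noteq> 0"
      define \<Lambda> where "\<Lambda> x = Lch g f (SOME c. c \<in> A \<and> x \<in> fst c) (snd (SOME c. c \<in> A \<and> x \<in> fst c) x)" for x
      have Leq: "\<Lambda> x = Lch g f c (snd c x)" if c: "c \<in> A" and x: "x \<in> fst c" for c x
      proof -
        have "(SOME c. c \<in> A \<and> x \<in> fst c) \<in> A \<and> x \<in> fst (SOME c. c \<in> A \<and> x \<in> fst c)"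
          using c x by (rule someI[of "\<lambda>c. c \<in> A \<and> x \<in> fst c", OF conjI])
        then show ?thesis unfolding \<Lambda>_def using L_indep[OF RM SF _ c _ x] by blast
      qed
      have Lpos: "\<Lambda> x > 0" if c: "c \<in> A" and x: "x \<in> fst c" for c x
      proof -
        have y: "snd c x \<in> snd c ` fst c" using x by simp
        have "x \<in> topspace X" using chart_sub[OF RM c] x by blast
        then have "Lch g f c (snd c x) \<noteq> 0" using G c x gradL[OF c x] by blast
        then show ?thesis using L_nonneg[OF RM SF c y] Leq[OF c x] by simp
      qed
      show ?thesis unfolding conformal_riemannian_morphism_real_def
      proof (intro conjI SF exI[of _ \<Lambda>] ballI impI)
        show "smooth_fun A \<Lambda>" unfolding smooth_fun_def
        proof
          fix c assume c: "c \<in> A"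
          show "smooth_on (snd c ` fst c) (\<Lambda> \<circ> chart_inv c)"
          proof (rule smooth_on_cong[OF chart_open[OF RM c] _ L_smooth[OF RM SF c]])
            fix y assume y: "y \<in> snd c ` fst c"
            show "Lch g f c y = (\<Lambda> \<circ> chart_inv c) y"
              using Leq[OF c chart_inv_in[OF RM y]] snd_chart_inv[OF RM y] by simp
          qed
        qed
        fix x assume xt: "x \<in> topspace X"
        then obtain c where c: "c \<in> A" and x: "x \<in> fst c" using top_cover[OF RM] by blast
        show "0 < \<Lambda> x" by (rule Lpos[OF c x])
      next
        fix x c assume xt: "x \<in> topspace X" and c: "c \<in> A" and x: "x \<in> fst c"
        have y: "snd c x \<in> snd c ` fst c" using x by simp
        have pos: "Dch f c (snd c x) (gvec (g c (snd c x)) (Dch f c (snd c x))) > 0"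
          using Lpos[OF c x] Leq[OF c x] L_eq[OF RM SF c y] by simp
        have "conformality_factor (g c (snd c x)) (\<lambda>a b. a * b) (Dch f c (snd c x))
               (Dch f c (snd c x) (gvec (g c (snd c x)) (Dch f c (snd c x))))"
          by (rule rep_conformal[OF metric_pd[OF RM c y] D_rep[OF RM SF c y] D_linear[OF RM SF c y] pos])
        then show "conformality_factor (g c (snd c x)) (\<lambda>a b. a * b) (dfun f c x) (\<Lambda> x)"
          unfolding dfun_eq using Leq[OF c x] L_eq[OF RM SF c y] by simp
      qed
    qed
  qed
qed


end
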